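(* Let $V_-=\{(u,v)\in\mathbb R_+^2:v\le 2pu/\beta\}$ and suppose $X:[0,T]\to\mathbb R^2$ is $C^1$, satisfies Condition I, and $X(0)\in V_-^o$ (the interior). Let $A_L,A_U$ start from $X(0)$. Then: (1) $X(t)\ge A_L(t)$ componentwise for every $t\le\tau^L_{V_-^c}\wedge\tau_{V_-^c}$, and $X(t)\le A_U(t)$ componentwise for every $t\le\tau^U_{V_-^c}\wedge\tau_{V_-^c}$; (2) if $\tau^\square_B$ denotes the hitting time of $B$ by the curve $(A_L^1(t),A_U^2(t))$, then $A_L(t)\le X(t)\le A_U(t)$ componentwise for every $t\le\tau^\square_{V_-^c}$. In particular, if $\tau^\square_{V_-^c}=\infty$ then $A_L(t)\le X(t)\le A_U(t)$ for all $t\in[0,T]$.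
   Context: Fix an integer $p\ge3$, $\beta>0$, $\Lambda_p>0$. $\mathcal F_1(u,v)=-pu+\beta v$, $\mathcal F_2^L(u,v)=2p(p-1)-2(p-1)v+2pu(pu-\beta v)-2\beta\Lambda_pv$, $\mathcal F_2^U$ the same with $+2\beta\Lambda_pv$. $A_L$ (resp. $A_U$) solves $\dot A=(\mathcal F_1,\mathcal F_2^L)(A)$ (resp. $(\mathcal F_1,\mathcal F_2^U)(A)$). Hitting times: $\tau_B=\inf\{t\ge0:X(t)\in B\}$, $\tau^L_B$, $\tau^U_B$ the analogues for $A_L,A_U$. Condition I: $\dot X_1=\mathcal F_1(X)$ and $\mathcal F_2^L(X)\le\dot X_2\le\mathcal F_2^U(X)$ on $[0,T]$. *)

theory Defs
  imports "HOL-Analysis.Analysis"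
begin

definition F1 :: "nat \<Rightarrow> real \<Rightarrow> real \<times> real \<Rightarrow> real" where
  "F1 p \<beta> x = - real p * fst x + \<beta> * snd x"

definition F2L :: "nat \<Rightarrow> real \<Rightarrow> real \<Rightarrow> real \<times> real \<Rightarrow> real" where
  "F2L p \<beta> \<Lambda> x = 2 * real p * (real p - 1) - 2 * (real p - 1) * snd x
     + 2 * real p * fst x * (real p * fst x - \<beta> * snd x) - 2 * \<beta> * \<Lambda> * snd x"

definition F2U :: "nat \<Rightarrow> real \<Rightarrow> real \<Rightarrow> real \<times> real \<Rightarrow> real" where
  "F2U p \<beta> \<Lambda> x = 2 * real p * (real p - 1) - 2 * (real p - 1) * snd x
     + 2 * real p * fst x * (real p * fst x - \<beta> * snd x) + 2 * \<beta> * \<Lambda> * snd x"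

definition Vminus :: "nat \<Rightarrow> real \<Rightarrow> (real \<times> real) set" where
  "Vminus p \<beta> = {(u, v). 0 \<le> u \<and> 0 \<le> v \<and> v \<le> 2 * real p * u / \<beta>}"

text \<open>Hitting time of B by a curve Y observed on [0,T]; infinity if never hit.\<close>
definition hit_time :: "(real \<Rightarrow> 'a) \<Rightarrow> 'a set \<Rightarrow> real \<Rightarrow> ereal" where
  "hit_time Y B T = Inf {ereal t | t. t \<in> {0..T} \<and> Y t \<in> B}"

end

theory Submission
  imports Defs
begin

lemma fst_deriv:
  assumes "(X has_vector_derivative X') F"
  shows "((\<lambda>t. fst (X t)) has_real_derivative fst X') F"
  using assms unfolding has_real_derivative_iff_has_vector_derivative
  by (metis bounded_linear.has_vector_derivative bounded_linear_fst)

lemma snd_deriv: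
  assumes "(X has_vector_derivative X') F"
  shows "((\<lambda>t. snd (X t)) has_real_derivative snd X') F"
  using assms unfolding has_real_derivative_iff_has_vector_derivative
  by (metis bounded_linear.has_vector_derivative bounded_linear_snd)

lemma prod_lb:
  fixes a z c B A d :: real
  assumes "a \<ge> -c*d" "z \<ge> -d" "z \<le> B" "\<bar>a\<bar> \<le> A" "d \<ge> 0" "c \<ge> 0" "B \<ge> 0"
  shows "a*z \<ge> -(c*B + A)*d"
proof (cases "z \<ge> 0")
  case True
  have "a*z \<ge> -c*d*z" using mult_right_mono[OF assms(1) True] by simp
  moreover have "c*d*z \<le> c*d*B" using assms True by (simp add: mult_left_mono)
  moreover have "A*d \<ge> 0" using assms by simp
  ultimately show ?thesis by (simp add: algebra_simps)
next
  case False
  have "\<bar>a*z\<bar> \<le> A*d" unfolding abs_mult using assms False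
    by (intro mult_mono) auto
  moreover have "c*B*d \<ge> 0" using assms False by simp
  ultimately show ?thesis by (simp add: algebra_simps)
qed

lemma barrier:
  fixes z z' :: "nat \<Rightarrow> real \<Rightarrow> real" and I :: "nat set" and S :: real
  assumes fin: "finite I" and S: "S \<ge> 0"
    and deriv: "\<And>i s. i \<in> I \<Longrightarrow> s \<in> {0..S} \<Longrightarrow> (z i has_real_derivative z' i s) (at s within {0..S})"
    and init: "\<And>i. i \<in> I \<Longrightarrow> z i 0 > 0"
    and crit: "\<And>s i. s \<in> {0<..S} \<Longrightarrow> i \<in> I \<Longrightarrow> (\<forall>j\<in>I. z j s \<ge> 0) \<Longrightarrow> z i s = 0 \<Longrightarrow> z' i s > 0"
  shows "\<forall>i\<in>I. \<forall>t\<in>{0..S}. z i t > 0"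
proof (rule ccontr)
  assume neg: "\<not> ?thesis"
  define C where "C = {t\<in>{0..S}. \<exists>i\<in>I. z i t \<le> 0}"
  have cont: "continuous_on {0..S} (z i)" if "i \<in> I" for i
    using deriv[OF that] by (meson DERIV_continuous continuous_on_eq_continuous_within)
  have CU: "C = (\<Union>i\<in>I. {0..S} \<inter> z i -` {..0})" unfolding C_def by auto
  have "closed C" unfolding CU
    by (intro closed_UN fin ballI continuous_closed_preimage cont) auto
  have Cne: "C \<noteq> {}" using neg unfolding C_def by force
  have bdd: "bdd_below C" unfolding C_def by (rule bdd_belowI[of _ 0]) auto
  define s where "s = Inf C"
  have sC: "s \<in> C" unfolding s_def using closed_contains_Inf[OF Cne bdd \<open>closed C\<close>] .
  have below: "\<And>t. t \<in> {0..S} \<Longrightarrow> t < s \<Longrightarrow> \<forall>j\<in>I. z j t > 0"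
  proof -
    fix t assume "t \<in> {0..S}" "t < s"
    then have "t \<notin> C" unfolding s_def using bdd cInf_lower by force
    then show "\<forall>j\<in>I. z j t > 0" using \<open>t \<in> {0..S}\<close> unfolding C_def by force
  qed
  have s0: "s > 0"
  proof -
    have "s \<ge> 0" "s \<le> S" using sC unfolding C_def by auto
    moreover have "s \<noteq> 0" using sC init unfolding C_def by force
    ultimately show ?thesis by simp
  qed
  have sS: "s \<le> S" using sC unfolding C_def by auto
  have nonneg: "\<forall>j\<in>I. z j s \<ge> 0"
  proof
    fix j assume j: "j \<in> I"
    have cl: "closed ({0..s} \<inter> z j -` {0..})"
      by (intro continuous_closed_preimage continuous_on_subset[OF cont[OF j]]) (use sS in auto)
    have "{0..<s} \<subseteq> {0..s} \<inter> z j -` {0..}"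
      using below j sS by (force)
    then have "closure {0..<s} \<subseteq> {0..s} \<inter> z j -` {0..}"
      using cl closure_minimal by blast
    moreover have "closure {0..<s} = {0..s}" using s0 by simp
    moreover have "s \<in> {0..s}" using s0 by simp
    ultimately have "s \<in> z j -` {0..}" by blast
    then show "z j s \<ge> 0" by simp
  qed
  obtain i where i: "i \<in> I" "z i s \<le> 0" using sC unfolding C_def by auto
  then have zi: "z i s = 0" using nonneg by force
  have pos: "z' i s > 0" using crit[of s i] s0 sS i nonneg zi by auto
  obtain d where d: "d > 0" "\<And>h. h > 0 \<Longrightarrow> s - h \<in> {0..S} \<Longrightarrow> h < d \<Longrightarrow> z i (s - h) < z i s"
    using has_real_derivative_pos_inc_left[OF deriv[OF i(1)] pos] s0 sS by auto
  define h where "h = min (d/2) (s/2)"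
  have "h > 0" "h < d" "s - h \<in> {0..S}" "s - h < s" using d s0 sS unfolding h_def by auto
  then have "z i (s - h) < 0" using d zi by force
  moreover have "z i (s - h) > 0" using below[OF \<open>s - h \<in> {0..S}\<close> \<open>s - h < s\<close>] i by auto
  ultimately show False by simp
qed

lemma comparison:
  fixes w w' :: "nat \<Rightarrow> real \<Rightarrow> real" and I :: "nat set" and S K :: real
  assumes fin: "finite I" and S: "S \<ge> 0"
    and deriv: "\<And>i s. i \<in> I \<Longrightarrow> s \<in> {0..S} \<Longrightarrow> (w i has_real_derivative w' i s) (at s within {0..S})"
    and init: "\<And>i. i \<in> I \<Longrightarrow> w i 0 \<ge> 0"
    and crit: "\<And>d s i. d > 0 \<Longrightarrow> s \<in> {0<..S} \<Longrightarrow> i \<in> I \<Longrightarrow> (\<forall>j\<in>I. w j s \<ge> -d) \<Longrightarrow> w i s = -d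
                  \<Longrightarrow> w' i s + K * d > 0"
  shows "\<forall>i\<in>I. \<forall>t\<in>{0..S}. w i t \<ge> 0"
proof -
  have main: "w i t > - e * exp (K * t)" if e: "e > 0" and i: "i \<in> I" and t: "t \<in> {0..S}" for e i t
  proof -
    define z where "z = (\<lambda>i r. w i r + e * exp (K * r))"
    define z' where "z' = (\<lambda>i r. w' i r + e * (K * exp (K * r)))"
    have "\<forall>i\<in>I. \<forall>t\<in>{0..S}. z i t > 0"
    proof (rule barrier[OF fin S])
      fix i s assume "i \<in> I" "s \<in> {0..S}"
      then show "(z i has_real_derivative z' i s) (at s within {0..S})"
        unfolding z_def z'_def using deriv[of i s]
        by (auto intro!: derivative_eq_intros)
    next
      fix i assume "i \<in> I" then show "z i 0 > 0" unfolding z_def using init e by (simp add: add_nonneg_pos)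
    next
      fix s i assume s: "s \<in> {0<..S}" and i: "i \<in> I" and nn: "\<forall>j\<in>I. z j s \<ge> 0" and zi: "z i s = 0"
      define d where "d = e * exp (K * s)"
      have d: "d > 0" unfolding d_def using e by simp
      have "\<forall>j\<in>I. w j s \<ge> -d" using nn unfolding z_def d_def by (auto simp: algebra_simps)
      moreover have "w i s = -d" using zi unfolding z_def d_def by (simp add: algebra_simps)
      ultimately have "w' i s + K * d > 0"
        using crit[OF d s i] by blast
      then show "z' i s > 0" unfolding z'_def d_def by (simp add: algebra_simps)
    qed
    then show ?thesis using i t unfolding z_def by force
  qed
  show ?thesis
  proof (intro ballI)
    fix i t assume i: "i \<in> I" and t: "t \<in> {0..S}"
    show "w i t \<ge> 0"
    proof (rule ccontr)
      assume "\<not> w i t \<ge> 0"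
      then have neg: "w i t < 0" by simp
      define e where "e = - w i t / exp (K * t)"
      have "e > 0" unfolding e_def using neg by (simp add: divide_less_0_iff)
      from main[OF this i t] show False unfolding e_def by simp
    qed
  qed
qed

lemma F1_diff: "F1 p \<beta> x1 - F1 p \<beta> x0 = - real p * (fst x1 - fst x0) + \<beta> * (snd x1 - snd x0)"
  unfolding F1_def by (simp add: algebra_simps)

lemma F1step:
  fixes p \<beta> w0 w1 d K D :: real
  assumes "D = - p * w0 + \<beta> * w1" "w0 = -d" "w1 \<ge> -d" "d > 0" "p \<ge> 0" "\<beta> \<ge> 0" "K > \<beta>"
  shows "D + K * d > 0"
proof -
  have "\<beta> * w1 \<ge> \<beta> * (-d)" using assms by (intro mult_left_mono) auto
  moreover have "p * d \<ge> 0" using assms by simp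
  moreover have "K * d > \<beta> * d" using assms by (intro mult_strict_right_mono) auto
  moreover have "D + K * d = p * d + \<beta> * w1 + K * d" using assms by simp
  ultimately show ?thesis by simp
qed

lemma I1: "F2L p \<beta> \<Lambda> x1 - F2L p \<beta> \<Lambda> x0 =
   2 * real p * (real p * (fst x1 + fst x0) - \<beta> * snd x0) * (fst x1 - fst x0)
   + (- (2 * real p * \<beta> * fst x1) - 2 * (real p - 1) + (-1) * (2 * \<beta> * \<Lambda>)) * (snd x1 - snd x0)"
  unfolding F2L_def by (simp add: algebra_simps power2_eq_square)

lemma I2: "F2U p \<beta> \<Lambda> x1 - F2U p \<beta> \<Lambda> x0 =
   2 * real p * (real p * (fst x1 + fst x0) - \<beta> * snd x0) * (fst x1 - fst x0)
   + (- (2 * real p * \<beta> * fst x1) - 2 * (real p - 1) + 1 * (2 * \<beta> * \<Lambda>)) * (snd x1 - snd x0)"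
  unfolding F2U_def by (simp add: algebra_simps power2_eq_square)

lemma I3: "F2L p \<beta> \<Lambda> x1 - F2L p \<beta> \<Lambda> x0 =
   2 * real p * (real p * (fst x1 + fst x0) - \<beta> * snd x1) * (fst x1 - fst x0)
   + (- (2 * real p * \<beta> * fst x0) - 2 * (real p - 1) + (-1) * (2 * \<beta> * \<Lambda>)) * (snd x1 - snd x0)"
  unfolding F2L_def by (simp add: algebra_simps power2_eq_square)

lemma I4: "F2U p \<beta> \<Lambda> x1 - F2U p \<beta> \<Lambda> x0 =
   2 * real p * (real p * (fst x1 + fst x0) - \<beta> * snd x1) * (fst x1 - fst x0)
   + (- (2 * real p * \<beta> * fst x0) - 2 * (real p - 1) + 1 * (2 * \<beta> * \<Lambda>)) * (snd x1 - snd x0)"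
  unfolding F2U_def by (simp add: algebra_simps power2_eq_square)

lemma F2step:
  fixes p \<beta> \<Lambda> R d K c u1 u0 v uu w0 w1 D \<sigma> :: real
  assumes "\<bar>u1\<bar> \<le> R" "\<bar>u0\<bar> \<le> R" "\<bar>v\<bar> \<le> R" "\<bar>uu\<bar> \<le> R" "p \<ge> 1" "\<beta> \<ge> 0" "\<Lambda> \<ge> 0" "\<bar>\<sigma>\<bar> = 1"
    and D: "D \<ge> 2 * p * (p * (u1 + u0) - \<beta> * v) * w0 + (- (2 * p * \<beta> * uu) - 2 * (p - 1) + \<sigma> * (2 * \<beta> * \<Lambda>)) * w1"
    and a: "2 * p * (p * (u1 + u0) - \<beta> * v) \<ge> - c * d"
    and "w0 \<ge> -d" "w0 \<le> 2 * R" "w1 = -d" "d > 0" "c \<ge> 0" "R \<ge> 0"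
    and K: "K > c * (2 * R) + 2 * p * (2 * p * R + \<beta> * R) + (2 * p * \<beta> * R + 2 * (p - 1) + 2 * \<beta> * \<Lambda>)"
  shows "D + K * d > 0"
proof -
  define a where "a = 2 * p * (p * (u1 + u0) - \<beta> * v)"
  define b where "b = - (2 * p * \<beta> * uu) - 2 * (p - 1) + \<sigma> * (2 * \<beta> * \<Lambda>)"
  have "\<bar>p * (u1 + u0) - \<beta> * v\<bar> \<le> p * (2 * R) + \<beta> * R"
  proof -
    have "\<bar>p * (u1 + u0)\<bar> \<le> p * (2 * R)" unfolding abs_mult using assms
      by (intro mult_mono) auto
    moreover have "\<bar>\<beta> * v\<bar> \<le> \<beta> * R" unfolding abs_mult using assms
      by (intro mult_mono) auto
    ultimately show ?thesis by linarith
  qed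
  then have "2 * p * \<bar>p * (u1 + u0) - \<beta> * v\<bar> \<le> 2 * p * (p * (2 * R) + \<beta> * R)"
    using assms by (intro mult_left_mono) auto
  moreover have "\<bar>a\<bar> = 2 * p * \<bar>p * (u1 + u0) - \<beta> * v\<bar>" unfolding a_def abs_mult using assms by simp
  ultimately have aA: "\<bar>a\<bar> \<le> 2 * p * (2 * p * R + \<beta> * R)" by (simp add: algebra_simps)
  have "\<bar>2 * p * \<beta> * uu\<bar> \<le> 2 * p * \<beta> * R" unfolding abs_mult using assms
    by (simp add: mult_left_mono)
  moreover have "\<bar>\<sigma> * (2 * \<beta> * \<Lambda>)\<bar> \<le> 2 * \<beta> * \<Lambda>" using assms by (simp add: abs_mult)
  ultimately have bB: "\<bar>b\<bar> \<le> 2 * p * \<beta> * R + 2 * (p - 1) + 2 * \<beta> * \<Lambda>" 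
    unfolding b_def abs_le_iff using assms(5) \<open>p \<ge> 1\<close>[THEN diff_ge_0_iff_ge[THEN iffD2], THEN mult_nonneg_nonneg[of 2, OF zero_le_numeral]]
    by (elim conjE, intro conjI) linarith+
  have 1: "a * w0 \<ge> - (c * (2*R) + 2 * p * (2 * p * R + \<beta> * R)) * d"
    by (rule prod_lb) (use assms aA in \<open>auto simp: a_def\<close>)
  have 2: "b * w1 \<ge> - (2 * p * \<beta> * R + 2 * (p - 1) + 2 * \<beta> * \<Lambda>) * d"
  proof -
    have "b * w1 = - b * d" using assms by simp
    moreover have "b * d \<le> \<bar>b\<bar> * d" using assms by (intro mult_right_mono) auto
    moreover have "\<bar>b\<bar> * d \<le> (2 * p * \<beta> * R + 2 * (p - 1) + 2 * \<beta> * \<Lambda>) * d"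
      using assms bB by (intro mult_right_mono) auto
    ultimately show ?thesis by linarith
  qed
  have 3: "(K - (c * (2 * R) + 2 * p * (2 * p * R + \<beta> * R) + (2 * p * \<beta> * R + 2 * (p - 1) + 2 * \<beta> * \<Lambda>))) * d > 0"
    using K assms by simp
  show ?thesis using D 1 2 3 unfolding a_def[symmetric] b_def[symmetric] by (simp add: algebra_simps)
qed

lemma hit_in:
  fixes Y :: "real \<Rightarrow> real \<times> real"
  assumes cont: "continuous_on {0..T} Y" and cl: "closed V" and Y0: "Y 0 \<in> V"
    and t: "t \<in> {0..T}" and h: "ereal t \<le> hit_time Y (-V) T"
  shows "Y t \<in> V"
proof -
  have below: "Y r \<in> V" if r: "r \<in> {0..<t}" for r
  proof (rule ccontr)
    assume "Y r \<notin> V"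
    then have "hit_time Y (-V) T \<le> ereal r" unfolding hit_time_def using t r
      by (intro Inf_lower) auto
    with h r show False using order_trans[OF h] by fastforce
  qed
  show ?thesis
  proof (cases "t = 0")
    case True then show ?thesis using Y0 by simp
  next
    case False
    then have t0: "t > 0" using t by auto
    have cl2: "closed ({0..t} \<inter> Y -` V)"
      by (intro continuous_closed_preimage continuous_on_subset[OF cont] cl) (use t in auto)
    have "{0..<t} \<subseteq> {0..t} \<inter> Y -` V" using below by auto
    then have "closure {0..<t} \<subseteq> {0..t} \<inter> Y -` V" using cl2 closure_minimal by blast
    moreover have "closure {0..<t} = {0..t}" using t0 by simp
    moreover have "t \<in> {0..t}" using t0 by simp
    ultimately show ?thesis by blast
  qed
qed

lemma bound2:
  fixes Y :: "real \<Rightarrow> real \<times> real"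
  assumes "continuous_on {0..T} Y"
  shows "\<exists>R\<ge>0. \<forall>t\<in>{0..T}. \<bar>fst (Y t)\<bar> \<le> R \<and> \<bar>snd (Y t)\<bar> \<le> R"
proof -
  have "compact (Y ` {0..T})" by (intro compact_continuous_image assms) simp
  then obtain B where B: "\<forall>x\<in>Y`{0..T}. norm x \<le> B"
    using compact_imp_bounded bounded_iff by metis
  have "\<bar>fst (Y t)\<bar> \<le> max B 0 \<and> \<bar>snd (Y t)\<bar> \<le> max B 0" if "t \<in> {0..T}" for t
  proof -
    have "norm (fst (Y t)) \<le> norm (Y t)" "norm (snd (Y t)) \<le> norm (Y t)"
      using norm_fst_le[of "fst (Y t)" "snd (Y t)"] norm_snd_le[of "snd (Y t)" "fst (Y t)"] by auto
    moreover have "norm (Y t) \<le> B" using B that by auto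
    ultimately show ?thesis by auto
  qed
  then show ?thesis by (intro exI[of _ "max B 0"]) auto
qed

lemma VH: "x \<in> Vminus p \<beta> \<Longrightarrow> \<beta> > 0 \<Longrightarrow> \<beta> * snd x \<le> 2 * real p * fst x"
  unfolding Vminus_def by (cases x) (auto simp: pos_le_divide_eq mult.commute)

lemma closedV: "closed (Vminus p \<beta>)"
proof -
  have "Vminus p \<beta> = {x. 0 \<le> fst x} \<inter> {x. 0 \<le> snd x} \<inter> {x. snd x \<le> (2 * real p / \<beta>) * fst x}"
    by (auto simp: Vminus_def)
  then show ?thesis
    by (simp only:) (intro closed_Int closed_Collect_le continuous_intros)
qed

lemma a_lb:
  fixes x k d p c :: real
  assumes "x \<ge> -k*d" "k \<ge> 0" "p \<ge> 0" "d > 0" "2*p*k \<le> c"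
  shows "2*p*x \<ge> -c*d"
proof -
  have "2*p*x \<ge> 2*p*(-k*d)" using assms by (intro mult_left_mono) auto
  moreover have "(2*p*k)*d \<le> c*d" using assms by (intro mult_right_mono) auto
  ultimately show ?thesis by (simp add: algebra_simps)
qed

theorem mainTheorem18:
  fixes p :: nat and \<beta> \<Lambda> T :: real
    and X X' AL AU :: "real \<Rightarrow> real \<times> real"
  assumes p: "p \<ge> 3" and beta: "\<beta> > 0" and Lam: "\<Lambda> > 0" and T: "0 \<le> T"
    and Xderiv: "\<And>t. t \<in> {0..T} \<Longrightarrow> (X has_vector_derivative X' t) (at t within {0..T})"
    and Xcont: "continuous_on {0..T} X'"
    and cond1: "\<And>t. t \<in> {0..T} \<Longrightarrow> fst (X' t) = F1 p \<beta> (X t)"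
    and cond2L: "\<And>t. t \<in> {0..T} \<Longrightarrow> F2L p \<beta> \<Lambda> (X t) \<le> snd (X' t)"
    and cond2U: "\<And>t. t \<in> {0..T} \<Longrightarrow> snd (X' t) \<le> F2U p \<beta> \<Lambda> (X t)"
    and X0: "X 0 \<in> interior (Vminus p \<beta>)"
    and ALode: "\<And>t. t \<in> {0..T} \<Longrightarrow>
       (AL has_vector_derivative (F1 p \<beta> (AL t), F2L p \<beta> \<Lambda> (AL t))) (at t within {0..T})"
    and AL0: "AL 0 = X 0"
    and AUode: "\<And>t. t \<in> {0..T} \<Longrightarrow>
       (AU has_vector_derivative (F1 p \<beta> (AU t), F2U p \<beta> \<Lambda> (AU t))) (at t within {0..T})"
    and AU0: "AU 0 = X 0"
  shows
    "(\<forall>t \<in> {0..T}. ereal t \<le> min (hit_time AL (- Vminus p \<beta>) T) (hit_time X (- Vminus p \<beta>) T)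
        \<longrightarrow> fst (AL t) \<le> fst (X t) \<and> snd (AL t) \<le> snd (X t))
   \<and> (\<forall>t \<in> {0..T}. ereal t \<le> min (hit_time AU (- Vminus p \<beta>) T) (hit_time X (- Vminus p \<beta>) T)
        \<longrightarrow> fst (X t) \<le> fst (AU t) \<and> snd (X t) \<le> snd (AU t))
   \<and> (\<forall>t \<in> {0..T}. ereal t \<le> hit_time (\<lambda>s. (fst (AL s), snd (AU s))) (- Vminus p \<beta>) T
        \<longrightarrow> fst (AL t) \<le> fst (X t) \<and> snd (AL t) \<le> snd (X t)
          \<and> fst (X t) \<le> fst (AU t) \<and> snd (X t) \<le> snd (AU t))
   \<and> (hit_time (\<lambda>s. (fst (AL s), snd (AU s))) (- Vminus p \<beta>) T = \<infinity>
        \<longrightarrow> (\<forall>t \<in> {0..T}. fst (AL t) \<le> fst (X t) \<and> snd (AL t) \<le> snd (X t)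
          \<and> fst (X t) \<le> fst (AU t) \<and> snd (X t) \<le> snd (AU t)))"
proof -
  have pR: "real p \<ge> 1" using p by simp
  have contX: "continuous_on {0..T} X"
    using Xderiv has_vector_derivative_continuous continuous_on_eq_continuous_within by blast
  have contAL: "continuous_on {0..T} AL"
    using ALode has_vector_derivative_continuous continuous_on_eq_continuous_within by blast
  have contAU: "continuous_on {0..T} AU"
    using AUode has_vector_derivative_continuous continuous_on_eq_continuous_within by blast
  have V0: "X 0 \<in> Vminus p \<beta>" using X0 interior_subset by blast
  obtain R1 where R1: "R1 \<ge> 0" "\<forall>t\<in>{0..T}. \<bar>fst (X t)\<bar> \<le> R1 \<and> \<bar>snd (X t)\<bar> \<le> R1"
    using bound2[OF contX] by blast
  obtain R2 where R2: "R2 \<ge> 0" "\<forall>t\<in>{0..T}. \<bar>fst (AL t)\<bar> \<le> R2 \<and> \<bar>snd (AL t)\<bar> \<le> R2"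
    using bound2[OF contAL] by blast
  obtain R3 where R3: "R3 \<ge> 0" "\<forall>t\<in>{0..T}. \<bar>fst (AU t)\<bar> \<le> R3 \<and> \<bar>snd (AU t)\<bar> \<le> R3"
    using bound2[OF contAU] by blast
  define R where "R = R1 + R2 + R3"
  have R0: "R \<ge> 0" using R1 R2 R3 by (simp add: R_def)
  have bX: "\<bar>fst (X t)\<bar> \<le> R" "\<bar>snd (X t)\<bar> \<le> R" if "t \<in> {0..T}" for t
    using R1 R2 R3 that unfolding R_def by fastforce+
  have bAL: "\<bar>fst (AL t)\<bar> \<le> R" "\<bar>snd (AL t)\<bar> \<le> R" if "t \<in> {0..T}" for t
    using R1 R2 R3 that unfolding R_def by fastforce+
  have bAU: "\<bar>fst (AU t)\<bar> \<le> R" "\<bar>snd (AU t)\<bar> \<le> R" if "t \<in> {0..T}" for t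
    using R1 R2 R3 that unfolding R_def by fastforce+
  define c0 where "c0 = 6 * real p ^ 2 + 2 * real p * (real p + \<beta>)"
  have c0: "c0 \<ge> 0" using beta by (simp add: c0_def)
  have c0a: "2 * real p * real p \<le> c0" using beta by (simp add: c0_def power2_eq_square)
  have c0b: "2 * real p * (real p + \<beta>) \<le> c0" using beta by (simp add: c0_def power2_eq_square)
  have c0c: "2 * real p * (3 * real p) \<le> c0" using beta by (simp add: c0_def power2_eq_square)
  define K0 where "K0 = c0 * (2 * R) + 2 * real p * (2 * real p * R + \<beta> * R)
     + (2 * real p * \<beta> * R + 2 * (real p - 1) + 2 * \<beta> * \<Lambda>) + \<beta> + 1"
  have K1: "K0 > c0 * (2 * R) + 2 * real p * (2 * real p * R + \<beta> * R)
     + (2 * real p * \<beta> * R + 2 * (real p - 1) + 2 * \<beta> * \<Lambda>)" using beta unfolding K0_def by simp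
  have K2: "K0 > \<beta>"
  proof -
    have "c0 * (2 * R) \<ge> 0" "2 * real p * (2 * real p * R + \<beta> * R) \<ge> 0" "2 * real p * \<beta> * R \<ge> 0"
      "2 * (real p - 1) \<ge> 0" "2 * \<beta> * \<Lambda> \<ge> 0"
      using c0 R0 beta Lam pR by auto
    then show ?thesis unfolding K0_def by linarith
  qed
  have dX1: "((\<lambda>r. fst (X r)) has_real_derivative fst (X' t)) (at t within {0..T})" if "t \<in> {0..T}" for t
    using fst_deriv[OF Xderiv[OF that]] .
  have dX2: "((\<lambda>r. snd (X r)) has_real_derivative snd (X' t)) (at t within {0..T})" if "t \<in> {0..T}" for t
    using snd_deriv[OF Xderiv[OF that]] .
  have dAL1: "((\<lambda>r. fst (AL r)) has_real_derivative F1 p \<beta> (AL t)) (at t within {0..T})" if "t \<in> {0..T}" for t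
    using fst_deriv[OF ALode[OF that]] by simp
  have dAL2: "((\<lambda>r. snd (AL r)) has_real_derivative F2L p \<beta> \<Lambda> (AL t)) (at t within {0..T})" if "t \<in> {0..T}" for t
    using snd_deriv[OF ALode[OF that]] by simp
  have dAU1: "((\<lambda>r. fst (AU r)) has_real_derivative F1 p \<beta> (AU t)) (at t within {0..T})" if "t \<in> {0..T}" for t
    using fst_deriv[OF AUode[OF that]] by simp
  have dAU2: "((\<lambda>r. snd (AU r)) has_real_derivative F2U p \<beta> \<Lambda> (AU t)) (at t within {0..T})" if "t \<in> {0..T}" for t
    using snd_deriv[OF AUode[OF that]] by simp
  have dd: "((\<lambda>r. f r - g r) has_real_derivative f' s - g' s) (at s within {0..t})"
    if "t \<in> {0..T}" "s \<in> {0..t}"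
      "\<And>s. s\<in>{0..T} \<Longrightarrow> (f has_real_derivative f' s) (at s within {0..T})"
      "\<And>s. s\<in>{0..T} \<Longrightarrow> (g has_real_derivative g' s) (at s within {0..T})" for f g f' g' t s
  proof -
    have sT: "s \<in> {0..T}" using that(1,2) by auto
    show ?thesis by (rule DERIV_subset[OF DERIV_diff[OF that(3)[OF sT] that(4)[OF sT]]]) (use that(1) in auto)
  qed
  have P1: "\<forall>t \<in> {0..T}. ereal t \<le> min (hit_time AL (- Vminus p \<beta>) T) (hit_time X (- Vminus p \<beta>) T)
        \<longrightarrow> fst (AL t) \<le> fst (X t) \<and> snd (AL t) \<le> snd (X t)"
  proof (intro ballI impI)
    fix t assume t: "t \<in> {0..T}" and ht: "ereal t \<le> min (hit_time AL (- Vminus p \<beta>) T) (hit_time X (- Vminus p \<beta>) T)"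
    have ALV: "AL s \<in> Vminus p \<beta>" if "s \<in> {0..t}" for s
    proof (rule hit_in[OF contAL closedV])
      show "AL 0 \<in> Vminus p \<beta>" using AL0 V0 by simp
      show "s \<in> {0..T}" using that t by auto
      have "ereal s \<le> ereal t" using that by simp
      then show "ereal s \<le> hit_time AL (- Vminus p \<beta>) T" using ht by (meson min.boundedE order_trans)
    qed
    define w where "w = (\<lambda>i::nat. if i = 0 then (\<lambda>r. fst (X r) - fst (AL r)) else (\<lambda>r. snd (X r) - snd (AL r)))"
    define w' where "w' = (\<lambda>i::nat. if i = 0 then (\<lambda>r. fst (X' r) - F1 p \<beta> (AL r)) else (\<lambda>r. snd (X' r) - F2L p \<beta> \<Lambda> (AL r)))"
    have "\<forall>i\<in>{0,1}. \<forall>r\<in>{0..t}. w i r \<ge> 0"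
    proof (rule comparison[where K = K0])
      show "finite {0, 1::nat}" by simp
      show "t \<ge> 0" using t by simp
    next
      fix i s assume i: "i \<in> {0, 1::nat}" and s: "s \<in> {0..t}"
      show "(w i has_real_derivative w' i s) (at s within {0..t})"
      proof (cases "i = 0")
        case True then show ?thesis unfolding w_def w'_def using dd[OF t s dX1 dAL1] by simp
      next
        case False then show ?thesis unfolding w_def w'_def using dd[OF t s dX2 dAL2] by simp
      qed
    next
      fix i assume "i \<in> {0, 1::nat}" then show "w i 0 \<ge> 0" unfolding w_def using AL0 by auto
    next
      fix d s i assume d: "d > 0" and s: "s \<in> {0<..t}" and i: "i \<in> {0, 1::nat}"
        and hj: "\<forall>j\<in>{0,1}. w j s \<ge> -d" and hi: "w i s = -d"
      have sT: "s \<in> {0..T}" using s t by auto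
      have w0: "w 0 s = fst (X s) - fst (AL s)" and w1: "w 1 s = snd (X s) - snd (AL s)"
        and w'0: "w' 0 s = fst (X' s) - F1 p \<beta> (AL s)" and w'1: "w' 1 s = snd (X' s) - F2L p \<beta> \<Lambda> (AL s)"
        by (simp_all add: w_def w'_def)
      have j0: "w 0 s \<ge> -d" and j1: "w 1 s \<ge> -d" using hj by auto
      have w0R: "w 0 s \<le> 2 * R" using bX(1)[OF sT] bAL(1)[OF sT] unfolding w0 by linarith
      show "w' i s + K0 * d > 0"
      proof (cases "i = 0")
        case True
        have "w' 0 s = - real p * w 0 s + \<beta> * w 1 s" unfolding w0 w1 w'0 cond1[OF sT] F1_diff ..
        then show ?thesis unfolding True
          by (rule F1step) (use True hi j1 d K2 beta in auto)
      next
        case False then have i1: "i = 1" using i by auto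
        have ALs: "\<beta> * snd (AL s) \<le> 2 * real p * fst (AL s)" using VH[OF ALV[of s] beta] s by auto
        have Dl: "w' 1 s \<ge> 2 * real p * (real p * (fst (X s) + fst (AL s)) - \<beta> * snd (AL s)) * w 0 s
            + (- (2 * real p * \<beta> * fst (X s)) - 2 * (real p - 1) + (-1) * (2 * \<beta> * \<Lambda>)) * w 1 s"
          unfolding w0 w1 w'1 using cond2L[OF sT] I1[of p \<beta> \<Lambda> "X s" "AL s"] by linarith
        have inner: "real p * (fst (X s) + fst (AL s)) - \<beta> * snd (AL s) \<ge> - real p * d"
        proof -
          have "real p * (fst (X s) - fst (AL s)) \<ge> real p * (-d)" using j0 unfolding w0 by (intro mult_left_mono) auto
          then show ?thesis using ALs by (simp add: algebra_simps)
        qed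
        have alb: "2 * real p * (real p * (fst (X s) + fst (AL s)) - \<beta> * snd (AL s)) \<ge> - c0 * d"
          by (rule a_lb[OF inner]) (use d c0a in auto)
        show ?thesis unfolding i1
          by (rule F2step[OF _ _ _ _ pR _ _ _ Dl alb j0 w0R hi[unfolded i1] d c0 R0 K1])
            (use bX[OF sT] bAL[OF sT] beta Lam in auto)
      qed
    qed
    then show "fst (AL t) \<le> fst (X t) \<and> snd (AL t) \<le> snd (X t)" using t unfolding w_def by auto
  qed
  have P2: "\<forall>t \<in> {0..T}. ereal t \<le> min (hit_time AU (- Vminus p \<beta>) T) (hit_time X (- Vminus p \<beta>) T)
        \<longrightarrow> fst (X t) \<le> fst (AU t) \<and> snd (X t) \<le> snd (AU t)"
  proof (intro ballI impI)
    fix t assume t: "t \<in> {0..T}" and ht: "ereal t \<le> min (hit_time AU (- Vminus p \<beta>) T) (hit_time X (- Vminus p \<beta>) T)"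
    have XV: "X s \<in> Vminus p \<beta>" if "s \<in> {0..t}" for s
    proof (rule hit_in[OF contX closedV])
      show "X 0 \<in> Vminus p \<beta>" using V0 by simp
      show "s \<in> {0..T}" using that t by auto
      have "ereal s \<le> ereal t" using that by simp
      then show "ereal s \<le> hit_time X (- Vminus p \<beta>) T" using ht by (meson min.boundedE order_trans)
    qed
    define w where "w = (\<lambda>i::nat. if i = 0 then (\<lambda>r. fst (AU r) - fst (X r)) else (\<lambda>r. snd (AU r) - snd (X r)))"
    define w' where "w' = (\<lambda>i::nat. if i = 0 then (\<lambda>r. F1 p \<beta> (AU r) - fst (X' r)) else (\<lambda>r. F2U p \<beta> \<Lambda> (AU r) - snd (X' r)))"
    have "\<forall>i\<in>{0,1}. \<forall>r\<in>{0..t}. w i r \<ge> 0"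
    proof (rule comparison[where K = K0])
      show "finite {0, 1::nat}" by simp
      show "t \<ge> 0" using t by simp
    next
      fix i s assume i: "i \<in> {0, 1::nat}" and s: "s \<in> {0..t}"
      show "(w i has_real_derivative w' i s) (at s within {0..t})"
      proof (cases "i = 0")
        case True then show ?thesis unfolding w_def w'_def using dd[OF t s dAU1 dX1] by simp
      next
        case False then show ?thesis unfolding w_def w'_def using dd[OF t s dAU2 dX2] by simp
      qed
    next
      fix i assume "i \<in> {0, 1::nat}" then show "w i 0 \<ge> 0" unfolding w_def using AU0 by auto
    next
      fix d s i assume d: "d > 0" and s: "s \<in> {0<..t}" and i: "i \<in> {0, 1::nat}"
        and hj: "\<forall>j\<in>{0,1}. w j s \<ge> -d" and hi: "w i s = -d"
      have sT: "s \<in> {0..T}" using s t by auto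
      have w0: "w 0 s = fst (AU s) - fst (X s)" and w1: "w 1 s = snd (AU s) - snd (X s)"
        and w'0: "w' 0 s = F1 p \<beta> (AU s) - fst (X' s)" and w'1: "w' 1 s = F2U p \<beta> \<Lambda> (AU s) - snd (X' s)"
        by (simp_all add: w_def w'_def)
      have j0: "w 0 s \<ge> -d" and j1: "w 1 s \<ge> -d" using hj by auto
      have w0R: "w 0 s \<le> 2 * R" using bX(1)[OF sT] bAU(1)[OF sT] unfolding w0 by linarith
      show "w' i s + K0 * d > 0"
      proof (cases "i = 0")
        case True
        have "w' 0 s = - real p * w 0 s + \<beta> * w 1 s" unfolding w0 w1 w'0 cond1[OF sT] F1_diff ..
        then show ?thesis unfolding True
          by (rule F1step) (use True hi j1 d K2 beta in auto)
      next
        case False then have i1: "i = 1" using i by auto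
        have Xs: "\<beta> * snd (X s) \<le> 2 * real p * fst (X s)" using VH[OF XV[of s] beta] s by auto
        have Dl: "w' 1 s \<ge> 2 * real p * (real p * (fst (AU s) + fst (X s)) - \<beta> * snd (X s)) * w 0 s
            + (- (2 * real p * \<beta> * fst (AU s)) - 2 * (real p - 1) + 1 * (2 * \<beta> * \<Lambda>)) * w 1 s"
          unfolding w0 w1 w'1 using cond2U[OF sT] I2[of p \<beta> \<Lambda> "AU s" "X s"] by linarith
        have inner: "real p * (fst (AU s) + fst (X s)) - \<beta> * snd (X s) \<ge> - real p * d"
        proof -
          have "real p * (fst (AU s) - fst (X s)) \<ge> real p * (-d)" using j0 unfolding w0 by (intro mult_left_mono) auto
          then show ?thesis using Xs by (simp add: algebra_simps)
        qed
        have alb: "2 * real p * (real p * (fst (AU s) + fst (X s)) - \<beta> * snd (X s)) \<ge> - c0 * d"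
          by (rule a_lb[OF inner]) (use d c0a in auto)
        show ?thesis unfolding i1
          by (rule F2step[OF _ _ _ _ pR _ _ _ Dl alb j0 w0R hi[unfolded i1] d c0 R0 K1])
            (use bX[OF sT] bAU[OF sT] beta Lam in auto)
      qed
    qed
    then show "fst (X t) \<le> fst (AU t) \<and> snd (X t) \<le> snd (AU t)" using t unfolding w_def by auto
  qed
  have contC: "continuous_on {0..T} (\<lambda>s. (fst (AL s), snd (AU s)))"
    by (intro continuous_on_Pair continuous_on_fst continuous_on_snd contAL contAU)
  have P3: "\<forall>t \<in> {0..T}. ereal t \<le> hit_time (\<lambda>s. (fst (AL s), snd (AU s))) (- Vminus p \<beta>) T
        \<longrightarrow> fst (AL t) \<le> fst (X t) \<and> snd (AL t) \<le> snd (X t)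
          \<and> fst (X t) \<le> fst (AU t) \<and> snd (X t) \<le> snd (AU t)"
  proof (intro ballI impI)
    fix t assume t: "t \<in> {0..T}" and ht: "ereal t \<le> hit_time (\<lambda>s. (fst (AL s), snd (AU s))) (- Vminus p \<beta>) T"
    have CV: "(fst (AL s), snd (AU s)) \<in> Vminus p \<beta>" if "s \<in> {0..t}" for s
    proof (rule hit_in[OF contC closedV])
      show "(fst (AL 0), snd (AU 0)) \<in> Vminus p \<beta>" using V0 AL0 AU0 by simp
      show "s \<in> {0..T}" using that t by auto
      have "ereal s \<le> ereal t" using that by simp
      then show "ereal s \<le> hit_time (\<lambda>s. (fst (AL s), snd (AU s))) (- Vminus p \<beta>) T" using ht by (meson order_trans)
    qed
    define w where "w = (\<lambda>i::nat. if i = 0 then (\<lambda>r. fst (X r) - fst (AL r)) else if i = 1 then (\<lambda>r. snd (X r) - snd (AL r))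
       else if i = 2 then (\<lambda>r. fst (AU r) - fst (X r)) else (\<lambda>r. snd (AU r) - snd (X r)))"
    define w' where "w' = (\<lambda>i::nat. if i = 0 then (\<lambda>r. fst (X' r) - F1 p \<beta> (AL r)) else if i = 1 then (\<lambda>r. snd (X' r) - F2L p \<beta> \<Lambda> (AL r))
       else if i = 2 then (\<lambda>r. F1 p \<beta> (AU r) - fst (X' r)) else (\<lambda>r. F2U p \<beta> \<Lambda> (AU r) - snd (X' r)))"
    have "\<forall>i\<in>{0,1,2,3}. \<forall>r\<in>{0..t}. w i r \<ge> 0"
    proof (rule comparison[where K = K0])
      show "finite {0, 1, 2, 3::nat}" by simp
      show "t \<ge> 0" using t by simp
    next
      fix i s assume i: "i \<in> {0, 1, 2, 3::nat}" and s: "s \<in> {0..t}"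
      then consider "i = 0" | "i = 1" | "i = 2" | "i = 3" by auto
      then show "(w i has_real_derivative w' i s) (at s within {0..t})"
      proof cases
        case 1 then show ?thesis unfolding w_def w'_def using dd[OF t s dX1 dAL1] by simp
      next
        case 2 then show ?thesis unfolding w_def w'_def using dd[OF t s dX2 dAL2] by simp
      next
        case 3 then show ?thesis unfolding w_def w'_def using dd[OF t s dAU1 dX1] by simp
      next
        case 4 then show ?thesis unfolding w_def w'_def using dd[OF t s dAU2 dX2] by simp
      qed
    next
      fix i assume "i \<in> {0, 1, 2, 3::nat}" then show "w i 0 \<ge> 0" unfolding w_def using AU0 AL0 by auto
    next
      fix d s i assume d: "d > 0" and s: "s \<in> {0<..t}" and i: "i \<in> {0, 1, 2, 3::nat}"
        and hj: "\<forall>j\<in>{0,1,2,3}. w j s \<ge> -d" and hi: "w i s = -d"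
      have sT: "s \<in> {0..T}" using s t by auto
      have w0: "w 0 s = fst (X s) - fst (AL s)" and w1: "w 1 s = snd (X s) - snd (AL s)"
        and w2: "w 2 s = fst (AU s) - fst (X s)" and w3: "w 3 s = snd (AU s) - snd (X s)"
        and w'0: "w' 0 s = fst (X' s) - F1 p \<beta> (AL s)" and w'1: "w' 1 s = snd (X' s) - F2L p \<beta> \<Lambda> (AL s)"
        and w'2: "w' 2 s = F1 p \<beta> (AU s) - fst (X' s)" and w'3: "w' 3 s = F2U p \<beta> \<Lambda> (AU s) - snd (X' s)"
        by (simp_all add: w_def w'_def)
      have j0: "w 0 s \<ge> -d" and j1: "w 1 s \<ge> -d" and j2: "w 2 s \<ge> -d" and j3: "w 3 s \<ge> -d" using hj by auto
      have w0R: "w 0 s \<le> 2 * R" using bX(1)[OF sT] bAL(1)[OF sT] unfolding w0 by linarith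
      have w2R: "w 2 s \<le> 2 * R" using bX(1)[OF sT] bAU(1)[OF sT] unfolding w2 by linarith
      have Cs: "\<beta> * snd (AU s) \<le> 2 * real p * fst (AL s)" using VH[OF CV[of s] beta] s by auto
      from i consider "i = 0" | "i = 1" | "i = 2" | "i = 3" by auto
      then show "w' i s + K0 * d > 0"
      proof cases
        case 1
        have "w' 0 s = - real p * w 0 s + \<beta> * w 1 s" unfolding w0 w1 w'0 cond1[OF sT] F1_diff ..
        then show ?thesis unfolding 1
          by (rule F1step) (use 1 hi j1 d K2 beta in auto)
      next
        case 3
        have "w' 2 s = - real p * w 2 s + \<beta> * w 3 s" unfolding w2 w3 w'2 cond1[OF sT] F1_diff ..
        then show ?thesis unfolding 3
          by (rule F1step) (use 3 hi j3 d K2 beta in auto)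
      next
        case 2
        have Dl: "w' 1 s \<ge> 2 * real p * (real p * (fst (X s) + fst (AL s)) - \<beta> * snd (X s)) * w 0 s
            + (- (2 * real p * \<beta> * fst (AL s)) - 2 * (real p - 1) + (-1) * (2 * \<beta> * \<Lambda>)) * w 1 s"
          unfolding w0 w1 w'1 using cond2L[OF sT] I3[of p \<beta> \<Lambda> "X s" "AL s"] by linarith
        have inner: "real p * (fst (X s) + fst (AL s)) - \<beta> * snd (X s) \<ge> - (real p + \<beta>) * d"
        proof -
          have "real p * (fst (X s) - fst (AL s)) \<ge> real p * (-d)" using j0 unfolding w0 by (intro mult_left_mono) auto
          moreover have "\<beta> * (snd (AU s) - snd (X s)) \<ge> \<beta> * (-d)" using j3 beta unfolding w3 by (intro mult_left_mono) auto
          ultimately show ?thesis using Cs by (simp add: algebra_simps)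
        qed
        have alb: "2 * real p * (real p * (fst (X s) + fst (AL s)) - \<beta> * snd (X s)) \<ge> - c0 * d"
          by (rule a_lb[OF inner]) (use d c0b beta in auto)
        show ?thesis unfolding 2
          by (rule F2step[OF _ _ _ _ pR _ _ _ Dl alb j0 w0R hi[unfolded 2] d c0 R0 K1])
            (use bX[OF sT] bAL[OF sT] beta Lam in auto)
      next
        case 4
        have Dl: "w' 3 s \<ge> 2 * real p * (real p * (fst (AU s) + fst (X s)) - \<beta> * snd (AU s)) * w 2 s
            + (- (2 * real p * \<beta> * fst (X s)) - 2 * (real p - 1) + 1 * (2 * \<beta> * \<Lambda>)) * w 3 s"
          unfolding w2 w3 w'3 using cond2U[OF sT] I4[of p \<beta> \<Lambda> "AU s" "X s"] by linarith
        have inner: "real p * (fst (AU s) + fst (X s)) - \<beta> * snd (AU s) \<ge> - (3 * real p) * d"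
        proof -
          have "real p * (fst (X s) - fst (AL s)) \<ge> real p * (-d)" using j0 unfolding w0 by (intro mult_left_mono) auto
          moreover have "real p * (fst (AU s) - fst (X s)) \<ge> real p * (-d)" using j2 unfolding w2 by (intro mult_left_mono) auto
          ultimately show ?thesis using Cs by (simp add: algebra_simps)
        qed
        have alb: "2 * real p * (real p * (fst (AU s) + fst (X s)) - \<beta> * snd (AU s)) \<ge> - c0 * d"
          by (rule a_lb[OF inner]) (use d c0c in auto)
        show ?thesis unfolding 4
          by (rule F2step[OF _ _ _ _ pR _ _ _ Dl alb j2 w2R hi[unfolded 4] d c0 R0 K1])
            (use bX[OF sT] bAU[OF sT] beta Lam in auto)
      qed
    qed
    then show "fst (AL t) \<le> fst (X t) \<and> snd (AL t) \<le> snd (X t)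
          \<and> fst (X t) \<le> fst (AU t) \<and> snd (X t) \<le> snd (AU t)" using t unfolding w_def by auto
  qed
  show ?thesis using P1 P2 P3 by auto
qed

end
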